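(* Let $k\ge2$ and $1\le n\le \ell$. Then $D_k(\ell)\le D_k(n)\,k^{\ell-n}$.
   Context: Labeled chip-firing on the infinite rooted directed $k$-ary tree (each vertex has $k$ children ordered left to right, root on layer $1$): a vertex with at least $k$ chips may fire by choosing any $k$ of its chips and sending the $i$-th smallest label among them to its $i$-th leftmost child; a configuration is stable when no vertex has $\ge k$ chips. Starting with $k^\ell$ chips labeled $1,\dots,k^\ell$ at the root, every stable configuration has exactly one chip on each vertex of layer $\ell+1$ and none elsewhere, and is identified with the permutation of labels read left to right on layer $\ell+1$. $D_k(\ell)$ denotes the maximum, over all reachable stable configurations, of the length of the longest strictly decreasing subsequence of the corresponding permutation. *)

theory Defs
  imports Main "HOL-Library.Sublist"
begin

text \<open>Vertices of the infinite rooted k-ary tree are finite lists of child indices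
  (each entry < k); the root is the empty list and lies on layer 1, so a vertex v lies
  on layer (length v + 1). The i-th leftmost child (0-based) of v is v @ [i].
  A labelled configuration assigns to each vertex the finite set of labels of the
  chips sitting there (labels are distinct).\<close>

type_synonym vertex = "nat list"
type_synonym config = "vertex \<Rightarrow> nat set"

definition fire_step :: "nat \<Rightarrow> config \<Rightarrow> config \<Rightarrow> bool" where
  "fire_step k c c' \<longleftrightarrow>
     (\<exists>v A. A \<subseteq> c v \<and> card A = k \<and>
        c' = (\<lambda>w. if w = v then c v - A
                  else if w \<noteq> [] \<and> butlast w = v \<and> last w < k
                       then insert (sorted_list_of_set A ! last w) (c w)
                  else c w))"

definition init_config :: "nat \<Rightarrow> nat \<Rightarrow> config" where
  "init_config k l = (\<lambda>v. if v = [] then {1..k ^ l} else {})"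

definition reachable :: "nat \<Rightarrow> nat \<Rightarrow> config \<Rightarrow> bool" where
  "reachable k l c \<longleftrightarrow> (fire_step k)\<^sup>*\<^sup>* (init_config k l) c"

definition stable :: "nat \<Rightarrow> config \<Rightarrow> bool" where
  "stable k c \<longleftrightarrow> (\<forall>v. card (c v) < k)"

text \<open>All vertices with n entries (i.e. on layer n+1), listed left to right.\<close>
fun layer_words :: "nat \<Rightarrow> nat \<Rightarrow> vertex list" where
  "layer_words k 0 = [[]]"
| "layer_words k (Suc n) = concat (map (\<lambda>i. map (\<lambda>w. i # w) (layer_words k n)) [0..<k])"

text \<open>The permutation of a stable configuration: labels read left to right on layer l+1
  (each such vertex carries exactly one chip).\<close>
definition config_perm :: "nat \<Rightarrow> nat \<Rightarrow> config \<Rightarrow> nat list" where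
  "config_perm k l c = map (\<lambda>w. the_elem (c w)) (layer_words k l)"

definition longest_decr :: "nat list \<Rightarrow> nat" where
  "longest_decr xs = Max {length ys | ys. subseq ys xs \<and> sorted_wrt (>) ys}"

definition D :: "nat \<Rightarrow> nat \<Rightarrow> nat" where
  "D k l = Max {longest_decr (config_perm k l c) | c. reachable k l c \<and> stable k c}"

end

theory Submission
  imports Defs
begin

lemma ld_set_fin: "finite {length ys | ys. subseq ys xs \<and> sorted_wrt (>) ys}"
proof -
  have "{length ys | ys. subseq ys xs \<and> sorted_wrt (>) ys} \<subseteq> {..length xs}"
    by (auto dest: list_emb_length)
  thus ?thesis using finite_subset by blast
qed

lemma ld_ge: "subseq ys xs \<Longrightarrow> sorted_wrt (>) ys \<Longrightarrow> length ys \<le> longest_decr xs"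
  unfolding longest_decr_def by (rule Max_ge[OF ld_set_fin]) blast

lemma ld_obtain: "\<exists>ys. subseq ys xs \<and> sorted_wrt (>) ys \<and> length ys = longest_decr xs"
proof -
  have "longest_decr xs \<in> {length ys | ys. subseq ys xs \<and> sorted_wrt (>) ys}"
    unfolding longest_decr_def
  proof (rule Max_in[OF ld_set_fin])
    have e: "subseq ([]::nat list) xs" by simp
    have "(0::nat) \<in> {length ys | ys. subseq ys xs \<and> sorted_wrt (>) ys}"
      unfolding mem_Collect_eq using e by (intro exI[of _ "[]"]) simp
    then show "{length ys | ys. subseq ys xs \<and> sorted_wrt (>) ys} \<noteq> {}" by (metis empty_iff)
  qed
  then obtain ys where "longest_decr xs = length ys" "subseq ys xs" "sorted_wrt (>) ys" by (auto simp only: mem_Collect_eq)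
  thus ?thesis by metis
qed

lemma ld_le_length: "longest_decr xs \<le> length xs"
proof -
  obtain ys where "subseq ys xs" "length ys = longest_decr xs" using ld_obtain[of xs] by blast
  then show ?thesis using list_emb_length by metis
qed

lemma ld_append: "longest_decr (xs @ ys) \<le> longest_decr xs + longest_decr ys"
proof -
  obtain zs where z: "subseq zs (xs @ ys)" "sorted_wrt (>) zs" "length zs = longest_decr (xs @ ys)"
    using ld_obtain by blast
  then obtain z1 z2 where "zs = z1 @ z2" "subseq z1 xs" "subseq z2 ys" by (auto elim: subseq_appendE)
  moreover have "sorted_wrt (>) z1" "sorted_wrt (>) z2" using z(2) \<open>zs = z1 @ z2\<close>
    by (auto simp: sorted_wrt_append)
  ultimately show ?thesis using ld_ge z(3) by (metis add_mono length_append)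
qed

lemma ld_concat: "longest_decr (concat xss) \<le> sum_list (map longest_decr xss)"
proof (induction xss)
  case Nil
  then show ?case using ld_le_length[of "[]"] by simp
next
  case (Cons xs xss)
  then show ?case using ld_append[of xs "concat xss"] by simp
qed

definition smo :: "nat set \<Rightarrow> (nat \<Rightarrow> nat) \<Rightarrow> bool" where
  "smo L g \<longleftrightarrow> (\<forall>x\<in>L. \<forall>y\<in>L. x < y \<longrightarrow> g x < g y)"

lemma smo_inj: "smo L g \<Longrightarrow> inj_on g L"
  unfolding smo_def inj_on_def by (metis linorder_neqE_nat less_irrefl)

lemma ld_map: assumes "smo (set xs) g" shows "longest_decr xs \<le> longest_decr (map g xs)"
proof -
  obtain ys where y: "subseq ys xs" "sorted_wrt (>) ys" "length ys = longest_decr xs"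
    using ld_obtain by blast
  have "set ys \<subseteq> set xs" using y(1) by (auto elim: list_emb_set)
  hence "sorted_wrt (>) (map g ys)" using y(2) assms unfolding smo_def
    by (auto simp: sorted_wrt_map elim!: sorted_wrt_mono_rel[rotated])
  hence "length (map g ys) \<le> longest_decr (map g xs)"
    using ld_ge subseq_map[OF y(1)] by blast
  thus ?thesis using y(3) by simp
qed

lemma length_layer_words: "length (layer_words k n) = k ^ n"
  by (induction n) (simp_all add: length_concat o_def sum_list_triv)

lemma set_layer_words_Suc: "set (layer_words k (Suc n)) = {j # w | j w. j < k \<and> w \<in> set (layer_words k n)}"
  by auto

definition lbl :: "config \<Rightarrow> nat set" where "lbl c = (\<Union>w. c w)"
definition sub :: "nat \<Rightarrow> config \<Rightarrow> config" where "sub j c = (\<lambda>w. c (j # w))"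
definition root_only :: "nat set \<Rightarrow> config" where "root_only R = (\<lambda>v. if v = [] then R else {})"
definition addroot :: "nat \<Rightarrow> config \<Rightarrow> config" where "addroot a d = d([] := insert a (d []))"
definition rel :: "(nat \<Rightarrow> nat) \<Rightarrow> config \<Rightarrow> config" where "rel g c = (\<lambda>w. g ` c w)"

lemma fire_stepE:
  assumes "fire_step k c c'"
  obtains v A where "A \<subseteq> c v" "card A = k"
    "c' = (\<lambda>w. if w = v then c v - A
                  else if w \<noteq> [] \<and> butlast w = v \<and> last w < k
                       then insert (sorted_list_of_set A ! last w) (c w)
                  else c w)"
  using assms unfolding fire_step_def by blast

lemma fire_lbl:
  assumes "0 < k" "fire_step k c c'" shows "lbl c' = lbl c"
proof -
  obtain v A where A: "A \<subseteq> c v" "card A = k" and c': "c' = (\<lambda>w. if w = v then c v - A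
                  else if w \<noteq> [] \<and> butlast w = v \<and> last w < k
                       then insert (sorted_list_of_set A ! last w) (c w)
                  else c w)" by (rule fire_stepE[OF assms(2)])
  have fin: "finite A" using A(2) assms(1) card_ge_0_finite by blast
  define sl where "sl = sorted_list_of_set A"
  have sl: "set sl = A" "length sl = k" using fin A(2) by (simp_all add: sl_def)
  have 1: "sl ! i \<in> A" if "i < k" for i using sl that nth_mem by blast
  show ?thesis
  proof
    show "lbl c' \<subseteq> lbl c"
    proof
      fix x assume "x \<in> lbl c'"
      then obtain w where xw: "x \<in> c' w" unfolding lbl_def by blast
      have "x \<in> c v \<or> x \<in> c w"
      proof (cases "w = v")
        case True
        then show ?thesis using xw unfolding c' by simp
      next
        case False
        show ?thesis
        proof (cases "w \<noteq> [] \<and> butlast w = v \<and> last w < k")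
          case True
          then have "x = sl ! last w \<or> x \<in> c w" using xw False unfolding c' sl_def by simp
          then show ?thesis using 1 True A(1) by blast
        next
          case F2: False
          have "c' w = c w" using False F2 unfolding c' by auto
          then show ?thesis using xw by simp
        qed
      qed
      then show "x \<in> lbl c" unfolding lbl_def by blast
    qed
    show "lbl c \<subseteq> lbl c'"
    proof
      fix x assume "x \<in> lbl c"
      then obtain w where x: "x \<in> c w" unfolding lbl_def by blast
      show "x \<in> lbl c'"
      proof (cases "w = v \<and> x \<in> A")
        case True
        then have "x \<in> set sl" using sl(1) by simp
        then obtain i where i0: "i < length sl" "sl ! i = x" by (auto simp: in_set_conv_nth)
        then have i: "i < k" "sl ! i = x" using sl(2) by auto
        have "x \<in> c' (v @ [i])" using i True unfolding c' sl_def by auto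
        then show ?thesis unfolding lbl_def by blast
      next
        case False
        then have "x \<in> c' w" using x unfolding c' by auto
        then show ?thesis unfolding lbl_def by blast
      qed
    qed
  qed
qed

lemma star_lbl: assumes "0 < k" "(fire_step k)\<^sup>*\<^sup>* c c'" shows "lbl c' = lbl c"
  using assms(2) by (induction rule: rtranclp_induct) (auto dest: fire_lbl[OF assms(1)])

lemma fire_addroot:
  assumes "fire_step k c c'" "a \<notin> lbl c"
  shows "fire_step k (addroot a c) (addroot a c')"
proof -
  obtain v A where A: "A \<subseteq> c v" "card A = k" and c': "c' = (\<lambda>w. if w = v then c v - A
                  else if w \<noteq> [] \<and> butlast w = v \<and> last w < k
                       then insert (sorted_list_of_set A ! last w) (c w)
                  else c w)" by (rule fire_stepE[OF assms(1)])
  have aA: "a \<notin> A" using A(1) assms(2) unfolding lbl_def by blast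
  show ?thesis unfolding fire_step_def
    apply (rule exI[of _ v], rule exI[of _ A])
    using A aA unfolding c' addroot_def by (auto simp: fun_eq_iff)
qed

lemma star_addroot:
  assumes "0 < k" "(fire_step k)\<^sup>*\<^sup>* c c'" "a \<notin> lbl c"
  shows "(fire_step k)\<^sup>*\<^sup>* (addroot a c) (addroot a c')"
  using assms(2)
proof (induction rule: rtranclp_induct)
  case base
  then show ?case by simp
next
  case (step y z)
  have "a \<notin> lbl y" using star_lbl[OF assms(1) step(1)] assms(3) by simp
  then show ?case using step fire_addroot by (metis rtranclp.rtrancl_into_rtrancl)
qed

lemma smo_sorted_list:
  assumes "smo A g" "finite A"
  shows "sorted_list_of_set (g ` A) = map g (sorted_list_of_set A)"
proof -
  have inj: "inj_on g A" using smo_inj[OF assms(1)] .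
  let ?l = "map g (sorted_list_of_set A)"
  have "sorted_wrt (<) (sorted_list_of_set A)" using assms(2) by simp
  hence "sorted_wrt (\<lambda>x y. g x < g y) (sorted_list_of_set A)"
    by (rule sorted_wrt_mono_rel[rotated]) (use assms in \<open>auto simp: smo_def\<close>)
  hence "sorted_wrt (<) ?l" by (simp add: sorted_wrt_map)
  moreover have "set ?l = g ` A" using assms(2) by simp
  moreover have "length ?l = card (g ` A)" using assms(2) inj by (simp add: card_image)
  ultimately show ?thesis
    using sorted_list_of_set_unique[of "g ` A" ?l] assms(2) by simp
qed

lemma fire_rel:
  assumes "fire_step k c c'" "smo L g" "lbl c \<subseteq> L" "0 < k"
  shows "fire_step k (rel g c) (rel g c')"
proof -
  obtain v A where A: "A \<subseteq> c v" "card A = k" and c': "c' = (\<lambda>w. if w = v then c v - A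
                  else if w \<noteq> [] \<and> butlast w = v \<and> last w < k
                       then insert (sorted_list_of_set A ! last w) (c w)
                  else c w)" by (rule fire_stepE[OF assms(1)])
  have cvL: "c v \<subseteq> L" using assms(3) unfolding lbl_def by blast
  have smoA: "smo A g" using assms(2) A(1) cvL unfolding smo_def by blast
  have injv: "inj_on g (c v)" using smo_inj[OF assms(2)] cvL inj_on_subset by blast
  show ?thesis
  proof -
    have finA: "finite A" using A(2) assms(4) card_ge_0_finite by blast
    have sl: "sorted_list_of_set (g ` A) ! i = g (sorted_list_of_set A ! i)" if "i < k" for i
      using smo_sorted_list[OF smoA finA] that A(2) finA by simp
    have cardg: "card (g ` A) = k" using A injv by (metis card_image inj_on_subset)
    show ?thesis unfolding fire_step_def
      apply (rule exI[of _ v], rule exI[of _ "g ` A"])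
      using A cardg sl unfolding c' rel_def
      by (auto simp: fun_eq_iff inj_on_image_set_diff[OF injv])
  qed
qed

lemma star_rel:
  assumes "0 < k" "(fire_step k)\<^sup>*\<^sup>* c c'" "smo L g" "lbl c \<subseteq> L"
  shows "(fire_step k)\<^sup>*\<^sup>* (rel g c) (rel g c')"
  using assms(2)
proof (induction rule: rtranclp_induct)
  case base
  then show ?case by simp
next
  case (step y z)
  have "lbl y \<subseteq> L" using star_lbl[OF assms(1) step(1)] assms(4) by simp
  then show ?case using step fire_rel assms by (metis rtranclp.rtrancl_into_rtrancl)
qed

lemma lbl_root_only[simp]: "lbl (root_only R) = R"
  unfolding lbl_def root_only_def by auto

lemma lbl_sub: "lbl (sub j c) \<subseteq> lbl c"
  unfolding lbl_def sub_def by auto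

lemma lbl_addroot: "lbl (addroot a d) = insert a (lbl d)"
  unfolding lbl_def addroot_def by (auto simp: fun_upd_apply) metis

lemma addroot_root_only: "addroot a (root_only R) = root_only (insert a R)"
  unfolding addroot_def root_only_def by (auto simp: fun_eq_iff)

lemma projection:
  assumes k: "0 < k" and fin: "finite R0" and st: "(fire_step k)\<^sup>*\<^sup>* (root_only R0) c"
  shows "\<exists>f. card (c []) + k * f = card R0 \<and> (\<forall>w. w \<noteq> [] \<longrightarrow> c [] \<inter> c w = {})
     \<and> (\<forall>j<k. card (lbl (sub j c)) = f \<and> (fire_step k)\<^sup>*\<^sup>* (root_only (lbl (sub j c))) (sub j c))"
  using st
proof (induction rule: rtranclp_induct)
  case base
  have "sub j (root_only R0) = root_only {}" for j
    unfolding sub_def root_only_def by (auto simp: fun_eq_iff)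
  then show ?case by (intro exI[of _ 0]) (auto simp: root_only_def lbl_def)
next
  case (step c c')
  obtain f where IH: "card (c []) + k * f = card R0" "\<forall>w. w \<noteq> [] \<longrightarrow> c [] \<inter> c w = {}"
     "\<forall>j<k. card (lbl (sub j c)) = f \<and> (fire_step k)\<^sup>*\<^sup>* (root_only (lbl (sub j c))) (sub j c)"
    using step.IH by blast
  have lblc: "lbl c = R0" using star_lbl[OF k step(1)] by simp
  obtain v A where A: "A \<subseteq> c v" "card A = k" and c': "c' = (\<lambda>w. if w = v then c v - A
                  else if w \<noteq> [] \<and> butlast w = v \<and> last w < k
                       then insert (sorted_list_of_set A ! last w) (c w)
                  else c w)" by (rule fire_stepE[OF step(2)])
  have finA: "finite A" using A(2) k card_ge_0_finite by blast
  define sl where "sl = sorted_list_of_set A"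
  have sl: "set sl = A" "length sl = k" using finA A(2) by (simp_all add: sl_def)
  have slA: "sl ! i \<in> A" if "i < k" for i using sl that nth_mem by blast
  have finc: "finite (c w)" for w using fin lblc unfolding lbl_def
    by (metis UN_upper finite_subset iso_tuple_UNIV_I)
  have finsub: "finite (lbl (sub j c))" for j using fin lblc lbl_sub finite_subset by metis
  show ?case
  proof (cases v)
    case Nil
    have c'0: "c' [] = c [] - A" using Nil c' by simp
    have cardA: "card A \<le> card (c [])" using A Nil finc card_mono by blast
    have sub': "sub j c' = addroot (sl ! j) (sub j c)" if "j < k" for j
      using that Nil unfolding c' sub_def addroot_def sl_def by (auto simp: fun_eq_iff)
    show ?thesis
    proof (intro exI[of _ "Suc f"] conjI allI impI)
      show "card (c' []) + k * Suc f = card R0"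
      proof -
        have "card (c' []) = card (c []) - k" using c'0 A Nil card_Diff_subset[OF finA] by simp
        then show ?thesis using cardA A(2) IH(1) by simp
      qed
    next
      fix w :: vertex assume "w \<noteq> []"
      then show "c' [] \<inter> c' w = {}" using IH(2) Nil slA unfolding c' sl_def by auto
    next
      fix j assume j: "j < k"
      have nin: "sl ! j \<notin> lbl (sub j c)"
      proof
        assume "sl ! j \<in> lbl (sub j c)"
        then obtain w where "sl ! j \<in> c (j # w)" unfolding lbl_def sub_def by auto
        moreover have "sl ! j \<in> c []" using slA[OF j] A(1) Nil by blast
        ultimately show False using IH(2) by blast
      qed
      show "card (lbl (sub j c')) = Suc f"
        using sub'[OF j] lbl_addroot nin finsub IH(3) j by simp
      show "(fire_step k)\<^sup>*\<^sup>* (root_only (lbl (sub j c'))) (sub j c')"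
      proof -
        have st: "(fire_step k)\<^sup>*\<^sup>* (root_only (lbl (sub j c))) (sub j c)" using IH(3) j by blast
        have "sl ! j \<notin> lbl (root_only (lbl (sub j c)))" using nin by simp
        from star_addroot[OF k st this] show ?thesis
          by (simp add: sub'[OF j] lbl_addroot addroot_root_only)
      qed
    qed
  next
    case (Cons j0 v')
    have c'0: "c' [] = c []" using Cons c' by simp
    have subo: "sub j c' = sub j c" if "j \<noteq> j0" for j
      using that Cons unfolding c' sub_def by (auto simp: fun_eq_iff)
    have fs: "fire_step k (sub j0 c) (sub j0 c')"
      unfolding fire_step_def
      apply (rule exI[of _ v'], rule exI[of _ A])
      using A Cons unfolding c' sub_def by (auto simp: fun_eq_iff)
    have lbleq: "lbl (sub j0 c') = lbl (sub j0 c)" using fire_lbl[OF k fs] .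
    show ?thesis
    proof (intro exI[of _ f] conjI allI impI)
      show "card (c' []) + k * f = card R0" using c'0 IH(1) by simp
    next
      fix w :: vertex assume "w \<noteq> []"
      have s1: "c' w \<subseteq> c v \<union> c w" using A(1) slA unfolding c' sl_def by auto
      have "c [] \<inter> c v = {}" "c [] \<inter> c w = {}" using IH(2) Cons \<open>w \<noteq> []\<close> by auto
      then show "c' [] \<inter> c' w = {}" using s1 c'0 by blast
    next
      fix j assume j: "j < k"
      have h: "card (lbl (sub j c)) = f" "(fire_step k)\<^sup>*\<^sup>* (root_only (lbl (sub j c))) (sub j c)"
        using IH(3) j by auto
      show "card (lbl (sub j c')) = f"
      proof (cases "j = j0")
        case True
        then show ?thesis using h(1) lbleq by simp
      next
        case False
        then show ?thesis using h(1) subo by simp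
      qed
      show "(fire_step k)\<^sup>*\<^sup>* (root_only (lbl (sub j c'))) (sub j c')"
      proof (cases "j = j0")
        case True
        have "(fire_step k)\<^sup>*\<^sup>* (root_only (lbl (sub j c))) (sub j c')"
          using h(2) fs[folded True] by (metis rtranclp.rtrancl_into_rtrancl)
        then show ?thesis using lbleq True by simp
      next
        case False
        then show ?thesis using h(2) subo by simp
      qed
    qed
  qed
qed

definition rk :: "nat set \<Rightarrow> nat \<Rightarrow> nat" where "rk R x = card {y\<in>R. y \<le> x}"

lemma rk_smo: assumes "finite R" shows "smo R (rk R)"
  unfolding smo_def rk_def
proof (intro ballI impI)
  fix x y assume "x \<in> R" "y \<in> R" "x < y"
  then have "{z\<in>R. z \<le> x} \<subseteq> {z\<in>R. z \<le> y}" "y \<in> {z\<in>R. z \<le> y}" "y \<notin> {z\<in>R. z \<le> x}" by auto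
  then have "{y\<in>R. y \<le> x} \<subset> {ya\<in>R. ya \<le> y}" by blast
  then show "card {y\<in>R. y \<le> x} < card {ya\<in>R. ya \<le> y}"
    using assms by (intro psubset_card_mono) auto
qed

lemma rk_image: assumes "finite R" shows "rk R ` R = {1..card R}"
proof -
  have sub: "rk R ` R \<subseteq> {1..card R}"
  proof
    fix z assume "z \<in> rk R ` R"
    then obtain x where x: "x \<in> R" "z = rk R x" by blast
    have "x \<in> {y\<in>R. y \<le> x}" using x by simp
    hence "{y\<in>R. y \<le> x} \<noteq> {}" by blast
    hence "0 < card {y\<in>R. y \<le> x}" using assms by (simp add: card_gt_0_iff)
    hence "1 \<le> z" using x unfolding rk_def by simp
    moreover have "card {y\<in>R. y \<le> x} \<le> card R" using assms by (intro card_mono) auto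
    hence "z \<le> card R" using x unfolding rk_def by simp
    ultimately show "z \<in> {1..card R}" by simp
  qed
  have "card (rk R ` R) = card R" using card_image smo_inj[OF rk_smo[OF assms]] by blast
  then show ?thesis using sub by (intro card_subset_eq) auto
qed

lemma rel_root_only: "rel g (root_only R) = root_only (g ` R)"
  unfolding rel_def root_only_def by (auto simp: fun_eq_iff)

lemma init_root_only: "init_config k l = root_only {1..k ^ l}"
  unfolding init_config_def root_only_def by simp

lemma sub_reach:
  assumes k: "2 \<le> k" and r: "reachable k (Suc m) c" and s: "stable k c" and j: "j < k"
  shows "\<exists>g. smo (lbl (sub j c)) g \<and> reachable k m (rel g (sub j c)) \<and> stable k (rel g (sub j c))"
proof -
  have k0: "0 < k" using k by simp
  obtain f where P: "card (c []) + k * f = card {1..k ^ Suc m}"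
     "\<forall>j<k. card (lbl (sub j c)) = f \<and> (fire_step k)\<^sup>*\<^sup>* (root_only (lbl (sub j c))) (sub j c)"
    using projection[OF k0 _ r[unfolded reachable_def init_root_only]] by auto
  have lt: "card (c []) < k" using s unfolding stable_def by blast
  have eq: "card (c []) + k * f = k * k ^ m" using P(1) by simp
  have "f = k ^ m"
  proof (rule ccontr)
    assume "f \<noteq> k ^ m"
    moreover have "f \<le> k ^ m"
    proof -
      have "k * f \<le> k * k ^ m" using eq by linarith
      thus ?thesis using k0 by simp
    qed
    ultimately have "Suc f \<le> k ^ m" by simp
    hence "k * Suc f \<le> k * k ^ m" by (rule mult_le_mono2)
    then show False using eq lt by simp
  qed
  define R where "R = lbl (sub j c)"
  have cR: "card R = k ^ m" and st: "(fire_step k)\<^sup>*\<^sup>* (root_only R) (sub j c)"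
    using P(2) j \<open>f = k ^ m\<close> unfolding R_def by auto
  have "0 < card R" using cR k0 by simp
  hence finR: "finite R" by (rule card_ge_0_finite)
  define g where "g = rk R"
  have sm: "smo R g" using rk_smo[OF finR] g_def by simp
  have "(fire_step k)\<^sup>*\<^sup>* (rel g (root_only R)) (rel g (sub j c))"
    using star_rel[OF k0 st sm] by simp
  hence re: "reachable k m (rel g (sub j c))"
    unfolding reachable_def init_root_only rel_root_only g_def rk_image[OF finR] cR .
  have "card (rel g (sub j c) w) < k" for w
  proof -
    have "sub j c w \<subseteq> R" unfolding R_def lbl_def by blast
    hence "inj_on g (sub j c w)" using smo_inj[OF sm] inj_on_subset by blast
    hence "card (rel g (sub j c) w) = card (c (j # w))" unfolding rel_def sub_def by (simp add: card_image)
    thus ?thesis using s unfolding stable_def by simp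
  qed
  hence "stable k (rel g (sub j c))" unfolding stable_def by blast
  thus ?thesis using sm re R_def by blast
qed

lemma reach0: assumes k: "2 \<le> k" and r: "reachable k 0 c" shows "c = root_only {1}"
proof -
  have nf: "\<not> fire_step k (root_only {1}) c'" for c'
  proof
    assume "fire_step k (root_only {1}) c'"
    then obtain v A where A: "A \<subseteq> root_only {1} v" "card A = k" unfolding fire_step_def by blast
    have "card A \<le> 1" using A(1) unfolding root_only_def
      by (cases "v = []") (auto simp: card_mono subset_singleton_iff)
    then show False using A(2) k by simp
  qed
  have "(fire_step k)\<^sup>*\<^sup>* (root_only {1}) c" using r unfolding reachable_def init_root_only by simp
  then show ?thesis
  proof (cases rule: converse_rtranclpE)
    case base
    then show ?thesis by simp
  next
    case (step y)
    then show ?thesis using nf by blast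
  qed
qed

lemma singletons:
  assumes k: "2 \<le> k" shows "reachable k l c \<Longrightarrow> stable k c \<Longrightarrow> \<forall>w\<in>set (layer_words k l). \<exists>x. c w = {x}"
proof (induction l arbitrary: c)
  case 0
  then have "c = root_only {1}" using reach0[OF k] by blast
  then show ?case by (simp add: root_only_def)
next
  case (Suc m)
  show ?case
  proof
    fix w assume "w \<in> set (layer_words k (Suc m))"
    then obtain j u where w: "w = j # u" "j < k" "u \<in> set (layer_words k m)" by auto
    obtain g where g: "smo (lbl (sub j c)) g" "reachable k m (rel g (sub j c))" "stable k (rel g (sub j c))"
      using sub_reach[OF k Suc.prems w(2)] by blast
    obtain x where x: "g ` c (j # u) = {x}" using Suc.IH[OF g(2,3)] w(3) unfolding rel_def sub_def by blast
    have "c (j # u) \<subseteq> lbl (sub j c)" unfolding lbl_def sub_def by blast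
    hence inj: "inj_on g (c (j # u))" using smo_inj[OF g(1)] inj_on_subset by blast
    have "card (c (j # u)) = 1" using card_image[OF inj] x by simp
    then show "\<exists>x. c w = {x}" using w(1) card_1_singletonE by blast
  qed
qed

definition put :: "nat \<Rightarrow> config \<Rightarrow> config \<Rightarrow> config" where
  "put j d c = (\<lambda>w. case w of [] \<Rightarrow> c [] | i # w' \<Rightarrow> if i = j then d w' else c w)"

lemma fire_put: assumes "fire_step k d d'" shows "fire_step k (put j d c) (put j d' c)"
proof -
  obtain v A where A: "A \<subseteq> d v" "card A = k" and d': "d' = (\<lambda>w. if w = v then d v - A
                  else if w \<noteq> [] \<and> butlast w = v \<and> last w < k
                       then insert (sorted_list_of_set A ! last w) (d w)
                  else d w)" by (rule fire_stepE[OF assms(1)])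
  show ?thesis unfolding fire_step_def
    apply (rule exI[of _ "j # v"], rule exI[of _ A])
    using A unfolding d' put_def by (auto simp: fun_eq_iff split: list.splits)
qed

lemma star_put: "(fire_step k)\<^sup>*\<^sup>* d d' \<Longrightarrow> (fire_step k)\<^sup>*\<^sup>* (put j d c) (put j d' c)"
  by (induction rule: rtranclp_induct) (auto intro: rtranclp.rtrancl_into_rtrancl fire_put)

lemma root_fire:
  assumes k: "0 < k" and fin: "finite R"
  shows "k * t \<le> card R \<Longrightarrow> \<exists>c. (fire_step k)\<^sup>*\<^sup>* (root_only R) c \<and> finite (c []) \<and> card (c []) = card R - k * t
     \<and> (\<forall>j<k. finite (c [j]) \<and> card (c [j]) = t \<and> c [] \<inter> c [j] = {})
     \<and> (\<forall>w. w \<noteq> [] \<and> (\<forall>j<k. w \<noteq> [j]) \<longrightarrow> c w = {})"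
proof (induction t)
  case 0
  show ?case by (rule exI[of _ "root_only R"]) (auto simp: root_only_def fin)
next
  case (Suc t)
  then obtain c where c: "(fire_step k)\<^sup>*\<^sup>* (root_only R) c" "finite (c [])" "card (c []) = card R - k * t"
     "\<forall>j<k. finite (c [j]) \<and> card (c [j]) = t \<and> c [] \<inter> c [j] = {}"
     "\<forall>w. w \<noteq> [] \<and> (\<forall>j<k. w \<noteq> [j]) \<longrightarrow> c w = {}" by auto
  have "k \<le> card (c [])" using Suc.prems c(3) by simp
  then obtain A where A: "A \<subseteq> c []" "card A = k" using obtain_subset_with_card_n by metis
  have finA: "finite A" using A(2) k card_ge_0_finite by blast
  define sl where "sl = sorted_list_of_set A"
  have sl: "set sl = A" "length sl = k" using finA A(2) by (simp_all add: sl_def)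
  have slA: "sl ! i \<in> A" if "i < k" for i using sl that nth_mem by blast
  define c' where "c' = (\<lambda>w. if w = [] then c [] - A
                  else if w \<noteq> [] \<and> butlast w = [] \<and> last w < k
                       then insert (sorted_list_of_set A ! last w) (c w)
                  else c w)"
  have fs: "fire_step k c c'" unfolding fire_step_def c'_def using A by blast
  show ?case
  proof (intro exI[of _ c'] conjI allI impI)
    show "(fire_step k)\<^sup>*\<^sup>* (root_only R) c'" using c(1) fs by simp
    show "finite (c' [])" using c(2) unfolding c'_def by simp
    show "card (c' []) = card R - k * Suc t"
      using c(2,3) A card_Diff_subset[OF finA A(1)] unfolding c'_def by simp
  next
    fix j assume j: "j < k"
    have nin: "sl ! j \<notin> c [j]" using c(4) j slA[OF j] A(1) by blast
    have c'j: "c' [j] = insert (sl ! j) (c [j])" using j unfolding c'_def sl_def by simp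
    show "finite (c' [j])" using c'j c(4) j by simp
    show "card (c' [j]) = Suc t" using c'j c(4) j nin by simp
    show "c' [] \<inter> c' [j] = {}" using c'j c(4) j slA[OF j] unfolding c'_def by auto
  next
    fix w :: vertex assume w: "w \<noteq> [] \<and> (\<forall>j<k. w \<noteq> [j])"
    then have "\<not> (butlast w = [] \<and> last w < k)"
      by (metis append_butlast_last_id append_Nil)
    then show "c' w = {}" using w c(5) unfolding c'_def by auto
  qed
qed

lemma existence:
  assumes k: "2 \<le> k"
  shows "finite R \<Longrightarrow> card R = k ^ l \<Longrightarrow> \<exists>c. (fire_step k)\<^sup>*\<^sup>* (root_only R) c \<and> stable k c"
proof (induction l arbitrary: R)
  case 0
  show ?case using 0 k by (intro exI[of _ "root_only R"]) (auto simp: stable_def root_only_def)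
next
  case (Suc m)
  have k0: "0 < k" using k by simp
  obtain c where c: "(fire_step k)\<^sup>*\<^sup>* (root_only R) c" "finite (c [])" "card (c []) = card R - k * k ^ m"
     "\<forall>j<k. finite (c [j]) \<and> card (c [j]) = k ^ m \<and> c [] \<inter> c [j] = {}"
     "\<forall>w. w \<noteq> [] \<and> (\<forall>j<k. w \<noteq> [j]) \<longrightarrow> c w = {}"
    using root_fire[OF k0 Suc.prems(1), of "k ^ m"] Suc.prems(2) by auto
  have c0: "c [] = {}" using c(2,3) Suc.prems(2) by simp
  have "\<forall>j. \<exists>d. j < k \<longrightarrow> (fire_step k)\<^sup>*\<^sup>* (root_only (c [j])) d \<and> stable k d"
    using Suc.IH c(4) by blast
  then obtain D where D: "\<And>j. j < k \<Longrightarrow> (fire_step k)\<^sup>*\<^sup>* (root_only (c [j])) (D j) \<and> stable k (D j)"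
    by metis
  define cp where "cp p = (\<lambda>w. case w of [] \<Rightarrow> {} | i # w' \<Rightarrow> if i < p \<and> i < k then D i w' else c w)" for p
  have cp0: "cp 0 = c" unfolding cp_def using c0 by (auto simp: fun_eq_iff split: list.splits)
  have stepp: "(fire_step k)\<^sup>*\<^sup>* (cp p) (cp (Suc p))" if p: "p < k" for p
  proof -
    have e1: "cp p = put p (root_only (c [p])) (cp p)"
      unfolding cp_def put_def root_only_def using c(5) p
      by (auto simp: fun_eq_iff split: list.splits)
    have e2: "cp (Suc p) = put p (D p) (cp p)"
      unfolding cp_def put_def using p by (auto simp: fun_eq_iff split: list.splits)
    show ?thesis using star_put[OF conjunct1[OF D[OF p]]] e1 e2 by metis
  qed
  have "p \<le> k \<Longrightarrow> (fire_step k)\<^sup>*\<^sup>* c (cp p)" for p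
  proof (induction p)
    case 0
    then show ?case using cp0 by simp
  next
    case (Suc p)
    then show ?case using stepp[of p] by (meson Suc_le_lessD less_imp_le rtranclp_trans)
  qed
  hence reach: "(fire_step k)\<^sup>*\<^sup>* (root_only R) (cp k)" using c(1) by (meson order_refl rtranclp_trans)
  have "card (cp k w) < k" for w
  proof (cases w)
    case Nil
    then show ?thesis unfolding cp_def using k0 by simp
  next
    case (Cons i w')
    show ?thesis
    proof (cases "i < k")
      case True
      then show ?thesis using D[OF True] Cons unfolding cp_def stable_def by simp
    next
      case False
      then have "c w = {}" using c(5) Cons by auto
      then show ?thesis using False Cons k0 unfolding cp_def by simp
    qed
  qed
  then show ?case using reach unfolding stable_def by blast
qed

lemma D_fin: "finite {longest_decr (config_perm k m c) | c. reachable k m c \<and> stable k c}"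
proof -
  have "{longest_decr (config_perm k m c) | c. reachable k m c \<and> stable k c} \<subseteq> {..k ^ m}"
    using ld_le_length by (auto simp: config_perm_def length_layer_words) (metis length_map length_layer_words)
  thus ?thesis using finite_subset by blast
qed

lemma D_ge: "reachable k m c \<Longrightarrow> stable k c \<Longrightarrow> longest_decr (config_perm k m c) \<le> D k m"
  unfolding D_def by (rule Max_ge[OF D_fin]) blast

lemma sum_list_bound: "(\<forall>x\<in>set xs. f x \<le> (B::nat)) \<Longrightarrow> sum_list (map f xs) \<le> length xs * B"
  by (induction xs) auto

lemma perm_bound:
  assumes k: "2 \<le> k" and r: "reachable k (Suc m) c" and s: "stable k c"
  shows "longest_decr (config_perm k (Suc m) c) \<le> k * D k m"
proof -
  have cp: "config_perm k (Suc m) c = concat (map (\<lambda>j. config_perm k m (sub j c)) [0..<k])"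
    unfolding config_perm_def sub_def by (simp add: map_concat o_def)
  have sing: "\<forall>w\<in>set (layer_words k (Suc m)). \<exists>x. c w = {x}" using singletons[OF k r s] .
  have each: "longest_decr (config_perm k m (sub j c)) \<le> D k m" if j: "j < k" for j
  proof -
    obtain g where g: "smo (lbl (sub j c)) g" "reachable k m (rel g (sub j c))" "stable k (rel g (sub j c))"
      using sub_reach[OF k r s j] by blast
    have sj: "\<exists>x. sub j c u = {x}" if "u \<in> set (layer_words k m)" for u
      using sing that j unfolding sub_def by auto
    have eqm: "config_perm k m (rel g (sub j c)) = map g (config_perm k m (sub j c))"
      unfolding config_perm_def rel_def map_map o_def
    proof (rule map_cong[OF refl])
      fix u assume "u \<in> set (layer_words k m)"
      then obtain x where "sub j c u = {x}" using sj by blast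
      then show "the_elem (g ` sub j c u) = g (the_elem (sub j c u))" by simp
    qed
    have "set (config_perm k m (sub j c)) \<subseteq> lbl (sub j c)"
      unfolding config_perm_def lbl_def using sj by fastforce
    hence "smo (set (config_perm k m (sub j c))) g" using g(1) unfolding smo_def by blast
    hence "longest_decr (config_perm k m (sub j c)) \<le> longest_decr (config_perm k m (rel g (sub j c)))"
      using ld_map eqm by simp
    also have "\<dots> \<le> D k m" using D_ge[OF g(2,3)] .
    finally show ?thesis .
  qed
  have "longest_decr (config_perm k (Suc m) c) \<le> sum_list (map (\<lambda>j. longest_decr (config_perm k m (sub j c))) [0..<k])"
    unfolding cp using ld_concat[of "map (\<lambda>j. config_perm k m (sub j c)) [0..<k]"] by (simp add: o_def)
  also have "\<dots> \<le> length [0..<k] * D k m" using each by (intro sum_list_bound) auto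
  finally show ?thesis by simp
qed

lemma D_step: assumes k: "2 \<le> k" shows "D k (Suc m) \<le> k * D k m"
proof -
  obtain c where "reachable k (Suc m) c" "stable k c"
    using existence[OF k, of "{1..k ^ Suc m}" "Suc m"] unfolding reachable_def init_root_only by auto
  hence ne: "{longest_decr (config_perm k (Suc m) c) | c. reachable k (Suc m) c \<and> stable k c} \<noteq> {}" by blast
  show ?thesis unfolding D_def[of k "Suc m"]
    using perm_bound[OF k] by (subst Max_le_iff[OF D_fin ne]) blast
qed

theorem proposition8p2:
  fixes k l n :: nat
  assumes "k \<ge> 2" and "1 \<le> n" and "n \<le> l"
  shows "D k l \<le> D k n * k ^ (l - n)"
proof -
  have "D k (n + d) \<le> D k n * k ^ d" for d
  proof (induction d)
    case 0
    then show ?case by simp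
  next
    case (Suc d)
    have "D k (n + Suc d) \<le> k * D k (n + d)" using D_step[OF assms(1)] by simp
    also have "\<dots> \<le> k * (D k n * k ^ d)" using Suc by simp
    finally show ?case by (simp add: algebra_simps)
  qed
  from this[of "l - n"] show ?thesis using assms(3) by simp
qed

end
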